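(* Let $A,B\in\mathfrak{J}_n$ be nonempty and let $h(x)=\mu\big(xA\,\widetilde\oplus\,(1-x)B\big)$ for $x\in\mathbb{R}$. If $A,B$ satisfy the zero-measure condition, then $h$ is continuous on all of $\mathbb{R}$. Otherwise $h$ is continuous at every $x\neq\frac12$.
   Context: $\mu$ is $n$-dimensional Lebesgue measure. $\operatorname{ci}(A)$ is the closure of the interior of $A$. $\mathfrak{J}_n$ is the family of bounded sets $A\subset\mathbb{R}^n$ with $A=\operatorname{ci}(A)$ and $\mu(\partial A)=0$. For nonempty bounded $A$, $d_S(p,A)=d(p,\partial A)$ if $p\in A$ and $d_S(p,A)=-d(p,\partial A)$ if $p\notin A$, with $d(q,E)=\min_{e\in E}\|q-e\|$. For nonempty $A,B\in\mathfrak{J}_n$, $x\in\mathbb{R}$: $f_{A,B,x}(p)=x\,d_S(p,A)+(1-x)\,d_S(p,B)$, the distance average is $xA\,\widetilde\oplus\,(1-x)B=\{p: f_{A,B,x}(p)\ge0\}$, and $\Omega_{A,B,x}=\{p: f_{A,B,x}(p)=0\}$. The sets $A,B$ satisfy the zero-measure condition if $\mu(\Omega_{A,B,1/2})=0$. *)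

theory Defs
  imports "HOL-Analysis.Analysis"
begin

definition J_class :: "'a::euclidean_space set \<Rightarrow> bool" where
  "J_class A \<longleftrightarrow> bounded A \<and> A = closure (interior A) \<and> measure lebesgue (frontier A) = 0"

text \<open>Signed distance to the boundary (d(q,E) = min distance, realised by infdist;
  the boundary is compact and nonempty for the sets considered).\<close>
definition signed_dist :: "'a::euclidean_space \<Rightarrow> 'a set \<Rightarrow> real" where
  "signed_dist p A = (if p \<in> A then infdist p (frontier A) else - infdist p (frontier A))"

definition f_avg :: "'a::euclidean_space set \<Rightarrow> 'a set \<Rightarrow> real \<Rightarrow> 'a \<Rightarrow> real" where
  "f_avg A B x p = x * signed_dist p A + (1 - x) * signed_dist p B"

definition dist_average :: "'a::euclidean_space set \<Rightarrow> 'a set \<Rightarrow> real \<Rightarrow> 'a set" where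
  "dist_average A B x = {p. f_avg A B x p \<ge> 0}"

definition Omega_set :: "'a::euclidean_space set \<Rightarrow> 'a set \<Rightarrow> real \<Rightarrow> 'a set" where
  "Omega_set A B x = {p. f_avg A B x p = 0}"

definition zero_measure_cond :: "'a::euclidean_space set \<Rightarrow> 'a set \<Rightarrow> bool" where
  "zero_measure_cond A B \<longleftrightarrow> measure lebesgue (Omega_set A B (1/2)) = 0"

end

theory Submission
  imports Defs
begin

lemma sd_opp:
  fixes A :: "'a::euclidean_space set"
  assumes "y \<in> A" "z \<notin> A"
  shows "\<bar>signed_dist y A - signed_dist z A\<bar> \<le> dist y z"
proof -
  have "closed_segment y z \<inter> frontier A \<noteq> {}"
    by (rule connected_Int_frontier) (use assms in auto)
  then obtain w where w: "w \<in> closed_segment y z" "w \<in> frontier A" by blast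
  have "dist y z = dist y w + dist w z"
    using w(1) by (simp add: between between_mem_segment[symmetric])
  moreover have "infdist y (frontier A) \<le> dist y w" "infdist z (frontier A) \<le> dist z w"
    using w(2) by (auto intro: infdist_le)
  moreover have "0 \<le> infdist y (frontier A)" "0 \<le> infdist z (frontier A)" by (auto intro: infdist_nonneg)
  ultimately show ?thesis using assms by (simp add: signed_dist_def dist_commute)
qed

lemma sd_lip:
  fixes A :: "'a::euclidean_space set"
  shows "\<bar>signed_dist y A - signed_dist z A\<bar> \<le> dist y z"
proof (cases "y \<in> A \<longleftrightarrow> z \<in> A")
  case True
  then show ?thesis using infdist_triangle_abs[of y "frontier A" z]
    by (auto simp: signed_dist_def)
next
  case False
  then show ?thesis using sd_opp[of y A z] sd_opp[of z A y]
    by (auto simp: dist_commute abs_minus_commute)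
qed

lemma f_avg_lip:
  "\<bar>f_avg A B x y - f_avg A B x z\<bar> \<le> (\<bar>x\<bar> + \<bar>1 - x\<bar>) * dist y z"
proof -
  have "\<bar>f_avg A B x y - f_avg A B x z\<bar> = \<bar>x * (signed_dist y A - signed_dist z A) + (1 - x) * (signed_dist y B - signed_dist z B)\<bar>"
    by (simp add: f_avg_def algebra_simps)
  also have "\<dots> \<le> \<bar>x\<bar> * \<bar>signed_dist y A - signed_dist z A\<bar> + \<bar>1 - x\<bar> * \<bar>signed_dist y B - signed_dist z B\<bar>"
    by (metis abs_mult abs_triangle_ineq)
  also have "\<dots> \<le> \<bar>x\<bar> * dist y z + \<bar>1 - x\<bar> * dist y z"
    by (intro add_mono mult_left_mono sd_lip) auto
  finally show ?thesis by (simp add: algebra_simps)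
qed

lemma sd_cont: "continuous_on UNIV (\<lambda>p. signed_dist p A)"
  unfolding continuous_on_iff
  by (metis dist_real_def sd_lip le_less_trans)

lemma f_avg_cont: "continuous_on UNIV (f_avg A B x)"
  unfolding f_avg_def
  by (intro continuous_intros continuous_on_compose2[OF sd_cont]) auto


lemma sd_descent:
  fixes A :: "'a::euclidean_space set"
  assumes F: "frontier A \<noteq> {}" and p: "p \<notin> frontier A"
  obtains q d where "d > 0" "\<And>t. 0 \<le> t \<Longrightarrow> t < d \<Longrightarrow>
      dist p (p + (t/d) *\<^sub>R (q - p)) = t \<and>
      \<bar>signed_dist (p + (t/d) *\<^sub>R (q - p)) A - signed_dist p A\<bar> = t"
proof -
  obtain q where q: "q \<in> frontier A" "infdist p (frontier A) = dist p q"
    using infdist_attains_inf[OF frontier_closed F] by blast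
  define d where "d = dist p q"
  have "d > 0" using q p unfolding d_def by (metis dist_pos_lt)
  have main: "dist p (p + (t/d) *\<^sub>R (q - p)) = t \<and>
      \<bar>signed_dist (p + (t/d) *\<^sub>R (q - p)) A - signed_dist p A\<bar> = t"
    if t: "0 \<le> t" "t < d" for t
  proof -
    define y where "y = p + (t/d) *\<^sub>R (q - p)"
    have nq: "norm (q - p) = d" by (simp add: d_def dist_norm norm_minus_commute)
    have dpy: "dist p y = t"
      using t \<open>d > 0\<close> by (simp add: y_def dist_norm nq)
    have "y - q = (1 - t/d) *\<^sub>R (p - q)" by (simp add: y_def algebra_simps)
    then have "dist y q = \<bar>1 - t/d\<bar> * d"
      by (simp add: dist_norm d_def dist_commute)
    moreover have "\<bar>1 - t/d\<bar> = 1 - t/d" using t \<open>d > 0\<close> by simp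
    moreover have "(1 - t/d) * d = d - t" using \<open>d > 0\<close> by (simp add: field_simps)
    ultimately have dyq: "dist y q = d - t" by simp
    have i1: "infdist y (frontier A) \<le> d - t" using infdist_le[OF q(1), of y] dyq by simp
    have i2: "infdist p (frontier A) \<le> infdist y (frontier A) + dist p y" by (rule infdist_triangle)
    have iy: "infdist y (frontier A) = d - t" using i1 i2 q(2) dpy d_def by simp
    have seg: "closed_segment p y \<inter> frontier A = {}"
    proof (rule ccontr)
      assume "closed_segment p y \<inter> frontier A \<noteq> {}"
      then obtain w where w: "w \<in> closed_segment p y" "w \<in> frontier A" by blast
      have "dist p w \<le> dist p y" using w(1) by (metis dist_commute dist_in_closed_segment)
      moreover have "dist p q \<le> dist p w" using infdist_le[OF w(2), of p] q(2) by simp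
      ultimately show False using dpy t d_def by simp
    qed
    have same: "p \<in> A \<longleftrightarrow> y \<in> A"
    proof (rule ccontr)
      assume "\<not> (p \<in> A \<longleftrightarrow> y \<in> A)"
      then have "closed_segment p y \<inter> A \<noteq> {}" "closed_segment p y - A \<noteq> {}" by auto
      then have "closed_segment p y \<inter> frontier A \<noteq> {}"
        by (intro connected_Int_frontier) auto
      with seg show False by simp
    qed
    have "\<bar>signed_dist y A - signed_dist p A\<bar> = t"
      using same iy q(2) d_def t by (auto simp: signed_dist_def)
    then show ?thesis using dpy y_def by simp
  qed
  show ?thesis by (rule that[OF \<open>d > 0\<close> main])
qed


lemma phi_lip:
  "\<bar>(a * signed_dist y A + b * signed_dist y B) - (a * signed_dist z A + b * signed_dist z B)\<bar>
     \<le> (\<bar>a\<bar> + \<bar>b\<bar>) * dist y z"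
proof -
  have "\<bar>(a * signed_dist y A + b * signed_dist y B) - (a * signed_dist z A + b * signed_dist z B)\<bar>
      = \<bar>a * (signed_dist y A - signed_dist z A) + b * (signed_dist y B - signed_dist z B)\<bar>"
    by (simp add: algebra_simps)
  also have "\<dots> \<le> \<bar>a\<bar> * \<bar>signed_dist y A - signed_dist z A\<bar> + \<bar>b\<bar> * \<bar>signed_dist y B - signed_dist z B\<bar>"
    by (metis abs_mult abs_triangle_ineq)
  also have "\<dots> \<le> \<bar>a\<bar> * dist y z + \<bar>b\<bar> * dist y z"
    by (intro add_mono mult_left_mono sd_lip) auto
  finally show ?thesis by (simp add: algebra_simps)
qed

lemma porous_zero:
  fixes A B :: "'a::euclidean_space set"
  assumes F: "frontier A \<noteq> {}" and ab: "\<bar>b\<bar> < \<bar>a\<bar>"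
    and p0: "a * signed_dist p A + b * signed_dist p B = 0" and p: "p \<notin> frontier A"
  shows "\<exists>\<rho>>0. \<forall>r. 0 < r \<and> r < \<rho> \<longrightarrow> (\<exists>y. ball y ((\<bar>a\<bar> - \<bar>b\<bar>) / (2 * (\<bar>a\<bar> + \<bar>b\<bar>)) * r) \<subseteq> ball p r \<and>
        (\<forall>z\<in>ball y ((\<bar>a\<bar> - \<bar>b\<bar>) / (2 * (\<bar>a\<bar> + \<bar>b\<bar>)) * r). a * signed_dist z A + b * signed_dist z B \<noteq> 0))"
proof -
  obtain q d where d: "d > 0" and D: "\<And>t. 0 \<le> t \<Longrightarrow> t < d \<Longrightarrow>
      dist p (p + (t/d) *\<^sub>R (q - p)) = t \<and>
      \<bar>signed_dist (p + (t/d) *\<^sub>R (q - p)) A - signed_dist p A\<bar> = t"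
    using sd_descent[OF F p] by blast
  define \<kappa> where "\<kappa> = (\<bar>a\<bar> - \<bar>b\<bar>) / (2 * (\<bar>a\<bar> + \<bar>b\<bar>))"
  define \<phi> where "\<phi> = (\<lambda>z. a * signed_dist z A + b * signed_dist z B)"
  have L: "\<bar>\<phi> y - \<phi> z\<bar> \<le> (\<bar>a\<bar> + \<bar>b\<bar>) * dist y z" for y z
    unfolding \<phi>_def by (rule phi_lip)
  have pos: "\<bar>a\<bar> + \<bar>b\<bar> > 0" using ab by linarith
  have k1: "\<kappa> \<le> 1/2" using ab pos unfolding \<kappa>_def by (simp add: field_simps)
  have k0: "\<kappa> > 0" using ab pos unfolding \<kappa>_def by (simp add: field_simps)
  have "\<exists>y. ball y (\<kappa> * r) \<subseteq> ball p r \<and> (\<forall>z\<in>ball y (\<kappa> * r). \<phi> z \<noteq> 0)"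
    if r: "0 < r" "r < d" for r
  proof -
    define t where "t = r/2"
    define y where "y = p + (t/d) *\<^sub>R (q - p)"
    have t: "0 \<le> t" "t < d" using r unfolding t_def by auto
    have dy: "dist p y = t" and sA: "\<bar>signed_dist y A - signed_dist p A\<bar> = t"
      using D[OF t] unfolding y_def by auto
    have sB: "\<bar>signed_dist y B - signed_dist p B\<bar> \<le> t" using sd_lip[of y B p] dy
      by (simp add: dist_commute)
    have "\<phi> y = a * (signed_dist y A - signed_dist p A) + b * (signed_dist y B - signed_dist p B)"
      using p0 unfolding \<phi>_def by (simp add: algebra_simps)
    moreover have "\<bar>a * (signed_dist y A - signed_dist p A)\<bar> = \<bar>a\<bar> * t" using sA by (simp add: abs_mult)
    moreover have "\<bar>b * (signed_dist y B - signed_dist p B)\<bar> \<le> \<bar>b\<bar> * t" using sB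
      by (simp add: abs_mult mult_left_mono)
    ultimately have py: "\<bar>\<phi> y\<bar> \<ge> (\<bar>a\<bar> - \<bar>b\<bar>) * t" by (simp add: algebra_simps)
    have kr: "(\<bar>a\<bar> + \<bar>b\<bar>) * (\<kappa> * r) = (\<bar>a\<bar> - \<bar>b\<bar>) * t"
    proof -
      have "(\<bar>a\<bar> + \<bar>b\<bar>) * ((\<bar>a\<bar> - \<bar>b\<bar>) / (2 * (\<bar>a\<bar> + \<bar>b\<bar>))) = (\<bar>a\<bar> - \<bar>b\<bar>) / 2"
        using pos by (simp add: divide_simps)
      then show ?thesis unfolding \<kappa>_def t_def by (metis mult.assoc times_divide_eq_left times_divide_eq_right mult.commute)
    qed
    show ?thesis
    proof (intro exI conjI ballI subsetI)
      fix z assume z: "z \<in> ball y (\<kappa> * r)"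
      then have "dist y z < \<kappa> * r" by simp
      then have "(\<bar>a\<bar> + \<bar>b\<bar>) * dist y z < (\<bar>a\<bar> - \<bar>b\<bar>) * t" using kr pos
        by (metis mult_strict_left_mono)
      then show "\<phi> z \<noteq> 0" using L[of y z] py by linarith
      have "dist p z \<le> dist p y + dist y z" by (rule dist_triangle)
      also have "\<dots> < t + \<kappa> * r" using dy \<open>dist y z < \<kappa> * r\<close> by simp
      also have "\<dots> \<le> r" using k1 r unfolding t_def by (simp add: field_simps)
      finally show "z \<in> ball p r" by simp
    qed
  qed
  then show ?thesis using d unfolding \<kappa>_def \<phi>_def by blast
qed


lemma ball_scale:
  fixes x y :: "'a::euclidean_space"
  assumes "0 \<le> r" "0 \<le> k"
  shows "measure lebesgue (ball y (k * r)) = k ^ DIM('a) * measure lebesgue (ball x r)"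
  using content_ball_conv_unit_ball[of "k*r" y] content_ball_conv_unit_ball[of r x] assms
  by (simp add: power_mult_distrib)

lemma porous_negligible:
  fixes S :: "'a::euclidean_space set"
  assumes S: "S \<in> lmeasurable" and k: "0 < \<kappa>"
    and P: "\<And>x. x \<in> S \<Longrightarrow> \<exists>\<rho>>0. \<forall>r. 0 < r \<and> r < \<rho> \<longrightarrow>
               (\<exists>y. ball y (\<kappa> * r) \<subseteq> ball x r \<and> ball y (\<kappa> * r) \<inter> S = {})"
  shows "negligible S"
proof (rule ccontr)
  assume nn: "\<not> negligible S"
  let ?\<mu> = "measure lebesgue"
  define m where "m = ?\<mu> S"
  have m: "m > 0" using nn S negligible_iff_measure0[OF S] measure_nonneg[of lebesgue S]
    unfolding m_def by linarith
  define \<theta> where "\<theta> = \<kappa> ^ DIM('a)"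
  have th: "\<theta> > 0" using k unfolding \<theta>_def by simp
  define \<delta> where "\<delta> = \<theta> * m / 2"
  have dl: "\<delta> > 0" using th m unfolding \<delta>_def by simp
  obtain U where U: "open U" "S \<subseteq> U" "(U - S) \<in> lmeasurable" "emeasure lebesgue (U - S) < ennreal \<delta>"
    using sets_lebesgue_outer_open[OF fmeasurableD[OF S] dl] by blast
  have mUS: "?\<mu> (U - S) < \<delta>"
    using U(4) emeasure_eq_measure2[OF U(3)] by (simp add: ennreal_less_iff)
  define K where "K = {(x,r). x \<in> S \<and> 0 < r \<and> ball x r \<subseteq> U \<and>
         (\<exists>y. ball y (\<kappa> * r) \<subseteq> ball x r \<and> ball y (\<kappa> * r) \<inter> S = {})}"
  obtain C where "countable C" and Csub: "C \<subseteq> K"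
    and pwC: "pairwise (\<lambda>i j. disjnt (ball (fst i) (snd i)) (ball (fst j) (snd j))) C"
    and negC: "negligible (S - (\<Union>i \<in> C. ball (fst i) (snd i)))"
  proof (rule Vitali_covering_theorem_balls [of S K fst snd])
    fix x and d :: real
    assume x: "x \<in> S" and "d > 0"
    obtain e where e: "e > 0" "ball x e \<subseteq> U" using U(1,2) x by (meson open_contains_ball subsetD)
    obtain \<rho> where \<rho>: "\<rho> > 0" "\<forall>r. 0 < r \<and> r < \<rho> \<longrightarrow>
               (\<exists>y. ball y (\<kappa> * r) \<subseteq> ball x r \<and> ball y (\<kappa> * r) \<inter> S = {})"
      using P[OF x] by blast
    define r where "r = min (min \<rho> d) e / 2"
    have r: "0 < r" "r < \<rho>" "r < d" "r \<le> e" using \<rho> e \<open>d > 0\<close> unfolding r_def by auto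
    have "ball x r \<subseteq> U" using subset_ball[OF r(4), of x] e(2) by blast
    then have "(x, r) \<in> K" using \<rho>(2) r x unfolding K_def by auto
    then show "\<exists>i. i \<in> K \<and> x \<in> ball (fst i) (snd i) \<and> snd i < d"
      using r by (intro exI[of _ "(x,r)"]) auto
  qed
  have ex: "\<forall>i\<in>C. \<exists>y. ball y (\<kappa> * snd i) \<subseteq> ball (fst i) (snd i) \<and> ball y (\<kappa> * snd i) \<inter> S = {}"
    using Csub unfolding K_def by auto
  then obtain Y where Y: "\<And>i. i \<in> C \<Longrightarrow> ball (Y i) (\<kappa> * snd i) \<subseteq> ball (fst i) (snd i) \<and>
        ball (Y i) (\<kappa> * snd i) \<inter> S = {}"
    using bchoice[OF ex] by blast
  have Cpos: "\<And>i. i \<in> C \<Longrightarrow> 0 < snd i" and CU: "\<And>i. i \<in> C \<Longrightarrow> ball (fst i) (snd i) \<subseteq> U"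
    using Csub unfolding K_def by (force, force)
  have fin: "?\<mu> (\<Union>i\<in>I. ball (fst i) (snd i)) \<le> \<delta> / \<theta>" if I: "I \<subseteq> C" "finite I" for I
  proof -
    have pwI: "pairwise (\<lambda>i j. disjnt (ball (fst i) (snd i)) (ball (fst j) (snd j))) I"
      using pwC I(1) by (rule pairwise_subset)
    have pwH: "pairwise (\<lambda>i j. disjnt (ball (Y i) (\<kappa> * snd i)) (ball (Y j) (\<kappa> * snd j))) I"
      unfolding pairwise_def disjnt_def
    proof (intro ballI impI)
      fix i j assume ij: "i \<in> I" "j \<in> I" "i \<noteq> j"
      then have "ball (fst i) (snd i) \<inter> ball (fst j) (snd j) = {}"
        using pwI unfolding pairwise_def disjnt_def by blast
      moreover have "ball (Y i) (\<kappa> * snd i) \<subseteq> ball (fst i) (snd i)" "ball (Y j) (\<kappa> * snd j) \<subseteq> ball (fst j) (snd j)"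
        using Y[of i] Y[of j] ij I(1) by (blast, blast)
      ultimately show "ball (Y i) (\<kappa> * snd i) \<inter> ball (Y j) (\<kappa> * snd j) = {}" by blast
    qed
    have e1: "?\<mu> (\<Union>i\<in>I. ball (fst i) (snd i)) = (\<Sum>i\<in>I. ?\<mu> (ball (fst i) (snd i)))"
      by (rule measure_UNION'[OF I(2) _ pwI]) auto
    have e2: "?\<mu> (\<Union>i\<in>I. ball (Y i) (\<kappa> * snd i)) = (\<Sum>i\<in>I. ?\<mu> (ball (Y i) (\<kappa> * snd i)))"
      by (rule measure_UNION'[OF I(2) _ pwH]) auto
    have e3: "(\<Sum>i\<in>I. ?\<mu> (ball (Y i) (\<kappa> * snd i))) = \<theta> * (\<Sum>i\<in>I. ?\<mu> (ball (fst i) (snd i)))"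
      unfolding sum_distrib_left \<theta>_def
      by (intro sum.cong refl ball_scale) (use k Cpos I(1) in \<open>auto simp: less_imp_le\<close>)
    have e4: "?\<mu> (\<Union>i\<in>I. ball (Y i) (\<kappa> * snd i)) \<le> ?\<mu> (U - S)"
    proof (rule measure_mono_fmeasurable)
      show "(\<Union>i\<in>I. ball (Y i) (\<kappa> * snd i)) \<subseteq> U - S"
        using Y CU I(1) by blast
    qed (use U(3) I(2) in \<open>auto intro!: sets.finite_UN\<close>)
    have "\<theta> * ?\<mu> (\<Union>i\<in>I. ball (fst i) (snd i)) = ?\<mu> (\<Union>i\<in>I. ball (Y i) (\<kappa> * snd i))"
      using e1 e2 e3 by simp
    then have "\<theta> * ?\<mu> (\<Union>i\<in>I. ball (fst i) (snd i)) \<le> \<delta>" using mUS e4 by linarith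
    then show ?thesis using th by (simp add: field_simps mult.commute)
  qed
  have W: "(\<Union>i\<in>C. ball (fst i) (snd i)) \<in> lmeasurable" "?\<mu> (\<Union>i\<in>C. ball (fst i) (snd i)) \<le> \<delta> / \<theta>"
    using fmeasurable_UN_bound[OF \<open>countable C\<close> _ fin] measure_UN_bound[OF \<open>countable C\<close> _ fin]
    by auto
  let ?W = "\<Union>i\<in>C. ball (fst i) (snd i)"
  have Nm: "(S - ?W) \<in> lmeasurable" "?\<mu> (S - ?W) = 0"
    using negC by (auto simp: negligible_imp_measurable negligible_imp_measure0)
  have "m \<le> ?\<mu> ((S - ?W) \<union> ?W)" unfolding m_def
    by (rule measure_mono_fmeasurable) (use Nm W S in \<open>auto intro: fmeasurable.Un\<close>)
  also have "\<dots> \<le> ?\<mu> (S - ?W) + ?\<mu> ?W"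
    by (rule measure_Un_le) (use Nm W in \<open>auto dest: fmeasurableD\<close>)
  also have "\<dots> \<le> \<delta> / \<theta>" using Nm W by simp
  also have "\<dots> = m / 2" using th unfolding \<delta>_def by simp
  finally show False using m by simp
qed

lemma sd_bound:
  fixes A :: "'a::euclidean_space set"
  assumes F: "frontier A \<noteq> {}" and R: "\<forall>q\<in>frontier A. norm q \<le> R"
  shows "\<bar>signed_dist p A\<bar> \<le> norm p + R"
proof -
  obtain q where q: "q \<in> frontier A" using F by blast
  have "infdist p (frontier A) \<le> dist p q" by (rule infdist_le[OF q])
  also have "\<dots> \<le> norm p + norm q" by (simp add: dist_norm norm_triangle_ineq4)
  finally show ?thesis using R q infdist_nonneg[of p "frontier A"]
    by (auto simp: signed_dist_def)
qed

lemma sd_outside: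
  fixes A :: "'a::euclidean_space set"
  assumes F: "frontier A \<noteq> {}" and R: "\<forall>q\<in>A. norm q \<le> R" and cl: "closed A"
    and p: "norm p > R"
  shows "signed_dist p A \<le> R - norm p"
proof -
  have pA: "p \<notin> A" using R p by force
  obtain q where q: "q \<in> frontier A" "infdist p (frontier A) = dist p q"
    using infdist_attains_inf[OF frontier_closed F] by blast
  have "norm q \<le> R" using R q(1) frontier_subset_closed[OF cl] by blast
  moreover have "norm p - norm q \<le> dist p q" by (simp add: dist_norm norm_triangle_ineq2)
  ultimately show ?thesis using q pA by (simp add: signed_dist_def)
qed

lemma f_avg_diff: "f_avg A B x p - f_avg A B x0 p = (x - x0) * (signed_dist p A - signed_dist p B)"
  by (simp add: f_avg_def algebra_simps)

lemma dist_average_bounded: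
  fixes A B :: "'a::euclidean_space set"
  assumes FA: "frontier A \<noteq> {}" and FB: "frontier B \<noteq> {}"
    and RA: "\<forall>q\<in>A. norm q \<le> R" and RB: "\<forall>q\<in>B. norm q \<le> R" and cA: "closed A" and cB: "closed B"
    and x: "\<bar>x\<bar> \<le> M" and R0: "0 \<le> R"
  shows "dist_average A B x \<subseteq> cball 0 (R + 2 * R * M)"
proof
  fix p assume p: "p \<in> dist_average A B x"
  show "p \<in> cball 0 (R + 2 * R * M)"
  proof (rule ccontr)
    assume "p \<notin> cball 0 (R + 2 * R * M)"
    then have np: "norm p > R + 2 * R * M" by simp
    have M0: "0 \<le> M" using x by linarith
    then have npR: "norm p > R" using np R0 by (smt (verit) mult_nonneg_nonneg)
    have FAR: "\<forall>q\<in>frontier A. norm q \<le> R" using RA frontier_subset_closed[OF cA] by blast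
    have FBR: "\<forall>q\<in>frontier B. norm q \<le> R" using RB frontier_subset_closed[OF cB] by blast
    have a1: "signed_dist p A \<le> R - norm p" by (rule sd_outside[OF FA RA cA npR])
    have b1: "signed_dist p B \<le> R - norm p" by (rule sd_outside[OF FB RB cB npR])
    have a2: "signed_dist p A \<ge> - (norm p + R)" using sd_bound[OF FA FAR, of p] by linarith
    have b2: "signed_dist p B \<ge> - (norm p + R)" using sd_bound[OF FB FBR, of p] by linarith
    have g: "\<bar>signed_dist p A - signed_dist p B\<bar> \<le> 2 * R" using a1 a2 b1 b2 by linarith
    have "f_avg A B x p = signed_dist p B + x * (signed_dist p A - signed_dist p B)"
      by (simp add: f_avg_def algebra_simps)
    also have "\<dots> \<le> (R - norm p) + \<bar>x\<bar> * (2 * R)"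
    proof -
      have "x * (signed_dist p A - signed_dist p B) \<le> \<bar>x\<bar> * \<bar>signed_dist p A - signed_dist p B\<bar>"
        by (metis abs_ge_self abs_mult)
      also have "\<dots> \<le> \<bar>x\<bar> * (2 * R)" using g by (simp add: mult_left_mono)
      finally show ?thesis using b1 by linarith
    qed
    also have "\<dots> \<le> (R - norm p) + M * (2 * R)"
      using x R0 by (simp add: mult_right_mono)
    finally have "f_avg A B x p < 0" using np by (simp add: algebra_simps)
    then show False using p by (simp add: dist_average_def)
  qed
qed

lemma measure_le_diff:
  assumes "P \<in> lmeasurable" "Q \<in> lmeasurable"
  shows "measure lebesgue P \<le> measure lebesgue Q + measure lebesgue (P - Q)"
proof -
  have "measure lebesgue P \<le> measure lebesgue (Q \<union> (P - Q))"
    by (rule measure_mono_fmeasurable) (use assms in \<open>auto intro: fmeasurable.Un\<close>)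
  also have "\<dots> \<le> measure lebesgue Q + measure lebesgue (P - Q)"
    by (rule measure_Un_le) (use assms in auto)
  finally show ?thesis .
qed


lemma h_cont_at:
  fixes A B :: "'a::euclidean_space set"
  assumes FA: "frontier A \<noteq> {}" and FB: "frontier B \<noteq> {}"
    and RA: "\<forall>q\<in>A. norm q \<le> R" and RB: "\<forall>q\<in>B. norm q \<le> R" and cA: "closed A" and cB: "closed B"
    and R0: "0 \<le> R" and neg: "negligible (Omega_set A B x0)"
  shows "isCont (\<lambda>x. measure lebesgue (dist_average A B x)) x0"
proof -
  let ?\<mu> = "measure lebesgue"
  define M where "M = \<bar>x0\<bar> + 1"
  define R' where "R' = R + 2 * R * M"
  define K where "K = cball (0::'a) R'"
  define G where "G = 2 * (R' + R) + 1"
  have FAR: "\<forall>q\<in>frontier A. norm q \<le> R" using RA frontier_subset_closed[OF cA] by blast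
  have FBR: "\<forall>q\<in>frontier B. norm q \<le> R" using RB frontier_subset_closed[OF cB] by blast
  have M0: "M \<ge> 1" unfolding M_def by simp
  have R'0: "R' \<ge> 0" unfolding R'_def using R0 M0 by simp
  have G0: "G > 0" unfolding G_def using R0 R'0 by simp
  have sub: "dist_average A B x \<subseteq> K" if "\<bar>x - x0\<bar> \<le> 1" for x
    unfolding K_def R'_def
    by (rule dist_average_bounded[OF FA FB RA RB cA cB _ R0]) (use that in \<open>simp add: M_def\<close>)
  have meas: "dist_average A B x \<in> lmeasurable" if "\<bar>x - x0\<bar> \<le> 1" for x
  proof (rule lmeasurable_compact)
    have "closed {p. 0 \<le> f_avg A B x p}"
      by (rule closed_Collect_le) (auto intro: f_avg_cont)
    moreover have "bounded (dist_average A B x)"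
      using sub[OF that] unfolding K_def by (meson bounded_cball bounded_subset)
    ultimately show "compact (dist_average A B x)"
      by (simp add: compact_eq_bounded_closed dist_average_def)
  qed
  have gb: "\<bar>signed_dist p A - signed_dist p B\<bar> \<le> G" if "p \<in> K" for p
  proof -
    have "norm p \<le> R'" using that unfolding K_def by simp
    moreover have "\<bar>signed_dist p A - signed_dist p B\<bar> \<le> \<bar>signed_dist p A\<bar> + \<bar>signed_dist p B\<bar>"
      by (rule abs_triangle_ineq4)
    ultimately show ?thesis using sd_bound[OF FA FAR, of p] sd_bound[OF FB FBR, of p]
      unfolding G_def by (smt (verit))
  qed
  define T where "T n = K \<inter> {p. \<bar>f_avg A B x0 p\<bar> \<le> 1 / Suc n}" for n
  have Tm: "T n \<in> lmeasurable" for n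
  proof (rule lmeasurable_compact)
    have "closed {p. \<bar>f_avg A B x0 p\<bar> \<le> 1 / Suc n}"
      by (rule closed_Collect_le) (auto intro!: continuous_intros intro: continuous_on_compose2[OF f_avg_cont])
    then show "compact (T n)" unfolding T_def K_def
      by (simp add: compact_Int_closed)
  qed
  have dec: "antimono_on UNIV T"
    unfolding decseq_Suc_iff
  proof
    fix n
    have le: "1 / real (Suc (Suc n)) \<le> 1 / real (Suc n)"
      by (rule divide_left_mono) auto
    show "T (Suc n) \<subseteq> T n" unfolding T_def using le by (auto simp del: of_nat_Suc)
  qed
  have capT: "\<Inter> (range T) \<subseteq> Omega_set A B x0"
  proof
    fix p assume p: "p \<in> \<Inter> (range T)"
    have "\<bar>f_avg A B x0 p\<bar> \<le> 1 / Suc n" for n using p unfolding T_def by auto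
    then have "\<bar>f_avg A B x0 p\<bar> \<le> 0"
      by (metis nat_approx_posE not_le of_nat_Suc le_less_trans)
    then show "p \<in> Omega_set A B x0" by (simp add: Omega_set_def)
  qed
  have "(\<lambda>n. ?\<mu> (T n)) \<longlonglongrightarrow> ?\<mu> (\<Inter> (range T))"
    by (rule Lim_measure_decseq) (use Tm dec in \<open>auto simp: fmeasurableD emeasure_eq_measure2\<close>)
  moreover have "?\<mu> (\<Inter> (range T)) = 0"
    using negligible_subset[OF neg capT] negligible_imp_measure0 by blast
  ultimately have lim: "(\<lambda>n. ?\<mu> (T n)) \<longlonglongrightarrow> 0" by simp
  show ?thesis
    unfolding continuous_at_eps_delta
  proof (intro allI impI)
    fix e :: real assume e: "e > 0"
    obtain N where N: "?\<mu> (T N) < e / 2"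
      using lim e unfolding lim_sequentially by (metis dist_real_def diff_zero half_gt_zero abs_of_nonneg measure_nonneg order_refl)
    define d where "d = min 1 (1 / (Suc N * G))"
    have d0: "d > 0" unfolding d_def using G0 by simp
    show "\<exists>d>0. \<forall>x. dist x x0 < d \<longrightarrow> dist (?\<mu> (dist_average A B x)) (?\<mu> (dist_average A B x0)) < e"
    proof (intro exI conjI allI impI)
      fix x assume "dist x x0 < d"
      then have xd: "\<bar>x - x0\<bar> < d" by (simp add: dist_real_def)
      then have x1: "\<bar>x - x0\<bar> \<le> 1" unfolding d_def by simp
      have xG: "\<bar>x - x0\<bar> * G \<le> 1 / Suc N"
      proof -
        have "\<bar>x - x0\<bar> \<le> 1 / (Suc N * G)" using xd unfolding d_def by simp
        then have "\<bar>x - x0\<bar> * G \<le> 1 / (Suc N * G) * G"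
          using G0 by (intro mult_right_mono) auto
        also have "\<dots> = 1 / Suc N" using G0 by simp
        finally show ?thesis .
      qed
      have key: "p \<in> T N" if "p \<in> K" "(0 \<le> f_avg A B x p) \<noteq> (0 \<le> f_avg A B x0 p)" for p
      proof -
        have "\<bar>f_avg A B x p - f_avg A B x0 p\<bar> \<le> \<bar>x - x0\<bar> * G"
          unfolding f_avg_diff abs_mult using gb[OF that(1)] by (simp add: mult_left_mono)
        then have "\<bar>f_avg A B x0 p\<bar> \<le> 1 / Suc N" using xG that(2) by linarith
        then show ?thesis using that(1) unfolding T_def by simp
      qed
      have s1: "dist_average A B x - dist_average A B x0 \<subseteq> T N"
        using key sub[OF x1] unfolding dist_average_def by blast
      have s2: "dist_average A B x0 - dist_average A B x \<subseteq> T N"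
        using key sub[of x0] unfolding dist_average_def by auto
      have m1: "?\<mu> (dist_average A B x - dist_average A B x0) \<le> ?\<mu> (T N)"
        by (rule measure_mono_fmeasurable[OF s1]) (use meas[OF x1] meas[of x0] Tm in auto)
      have m2: "?\<mu> (dist_average A B x0 - dist_average A B x) \<le> ?\<mu> (T N)"
        by (rule measure_mono_fmeasurable[OF s2]) (use meas[OF x1] meas[of x0] Tm in auto)
      have "?\<mu> (dist_average A B x) \<le> ?\<mu> (dist_average A B x0) + ?\<mu> (dist_average A B x - dist_average A B x0)"
        by (rule measure_le_diff[OF meas[OF x1] meas]) simp
      moreover have "?\<mu> (dist_average A B x0) \<le> ?\<mu> (dist_average A B x) + ?\<mu> (dist_average A B x0 - dist_average A B x)"
        by (rule measure_le_diff[OF meas meas[OF x1]]) simp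
      ultimately show "dist (?\<mu> (dist_average A B x)) (?\<mu> (dist_average A B x0)) < e"
        using m1 m2 N unfolding dist_real_def by linarith
    qed (rule d0)
  qed
qed



lemma zero_set_negligible:
  fixes A B :: "'a::euclidean_space set"
  assumes FA: "frontier A \<noteq> {}" and nF: "negligible (frontier A)" and ab: "\<bar>b\<bar> < \<bar>a\<bar>"
    and bd: "bounded {p. a * signed_dist p A + b * signed_dist p B = 0}"
  shows "negligible {p. a * signed_dist p A + b * signed_dist p B = 0}"
proof -
  define Z where "Z = {p. a * signed_dist p A + b * signed_dist p B = 0}"
  define \<kappa> where "\<kappa> = (\<bar>a\<bar> - \<bar>b\<bar>) / (2 * (\<bar>a\<bar> + \<bar>b\<bar>))"
  have k0: "\<kappa> > 0" using ab unfolding \<kappa>_def by (simp add: divide_pos_pos)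
  have cZ: "closed Z" unfolding Z_def
    by (rule closed_Collect_eq) (auto intro!: continuous_intros intro: continuous_on_compose2[OF sd_cont])
  have Zm: "Z \<in> lmeasurable" using cZ bd unfolding Z_def
    by (simp add: lmeasurable_compact compact_eq_bounded_closed Z_def)
  have Fm: "frontier A \<in> lmeasurable" using nF by (rule negligible_imp_measurable)
  have "negligible (Z - frontier A)"
  proof (rule porous_negligible[OF _ k0])
    show "Z - frontier A \<in> lmeasurable" using Zm Fm by (rule fmeasurable.Diff)
    fix x assume x: "x \<in> Z - frontier A"
    then have x0: "a * signed_dist x A + b * signed_dist x B = 0" "x \<notin> frontier A"
      unfolding Z_def by auto
    obtain \<rho> where \<rho>: "\<rho> > 0" "\<And>r. 0 < r \<Longrightarrow> r < \<rho> \<Longrightarrow> (\<exists>y. ball y (\<kappa> * r) \<subseteq> ball x r \<and>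
        (\<forall>z\<in>ball y (\<kappa> * r). a * signed_dist z A + b * signed_dist z B \<noteq> 0))"
      using porous_zero[OF FA ab x0] unfolding \<kappa>_def[symmetric] by blast
    show "\<exists>\<rho>>0. \<forall>r. 0 < r \<and> r < \<rho> \<longrightarrow>
               (\<exists>y. ball y (\<kappa> * r) \<subseteq> ball x r \<and> ball y (\<kappa> * r) \<inter> (Z - frontier A) = {})"
    proof (intro exI[of _ \<rho>] conjI allI impI)
      fix r assume r: "0 < r \<and> r < \<rho>"
      then obtain y where y: "ball y (\<kappa> * r) \<subseteq> ball x r"
        "\<forall>z\<in>ball y (\<kappa> * r). a * signed_dist z A + b * signed_dist z B \<noteq> 0"
        using \<rho>(2)[of r] by blast
      have "ball y (\<kappa> * r) \<inter> (Z - frontier A) = {}"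
        using y(2) unfolding Z_def by blast
      then show "\<exists>y. ball y (\<kappa> * r) \<subseteq> ball x r \<and> ball y (\<kappa> * r) \<inter> (Z - frontier A) = {}"
        using y(1) by blast
    qed (rule \<rho>(1))
  qed
  then have "negligible ((Z - frontier A) \<union> frontier A)" using nF by (rule negligible_Un)
  then show ?thesis unfolding Z_def[symmetric] by (rule negligible_subset) auto
qed


lemma J_facts:
  fixes A :: "'a::euclidean_space set"
  assumes "A \<noteq> {}" "J_class A"
  shows "closed A" "frontier A \<noteq> {}" "negligible (frontier A)" "bounded A"
proof -
  show cA: "closed A" using assms(2) unfolding J_class_def by (metis closed_closure)
  show bA: "bounded A" using assms(2) unfolding J_class_def by blast
  have "A \<noteq> UNIV" using bA not_bounded_UNIV by blast
  then show "frontier A \<noteq> {}" using assms(1) frontier_not_empty by blast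
  have "compact (frontier A)"
    using bA cA by (meson bounded_subset compact_eq_bounded_closed frontier_closed frontier_subset_closed)
  then have "frontier A \<in> lmeasurable" by (rule lmeasurable_compact)
  then show "negligible (frontier A)"
    using assms(2) unfolding J_class_def by (simp add: negligible_iff_measure0)
qed

theorem mainTheorem5:
  fixes A B :: "'a::euclidean_space set"
  assumes "A \<noteq> {}" and "B \<noteq> {}" and "J_class A" and "J_class B"
  defines "h \<equiv> (\<lambda>x. measure lebesgue (dist_average A B x))"
  shows "(zero_measure_cond A B \<longrightarrow> continuous_on UNIV h)
       \<and> (\<not> zero_measure_cond A B \<longrightarrow> (\<forall>x. x \<noteq> 1/2 \<longrightarrow> isCont h x))"
proof -
  note JA = J_facts[OF assms(1,3)] and JB = J_facts[OF assms(2,4)]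
  obtain R where R: "R > 0" "\<forall>q\<in>A \<union> B. norm q \<le> R"
    using bounded_Un[of A B] JA(4) JB(4) bounded_pos by metis
  have RA: "\<forall>q\<in>A. norm q \<le> R" and RB: "\<forall>q\<in>B. norm q \<le> R" using R(2) by auto
  have Obd: "bounded (Omega_set A B x0)" for x0
  proof -
    have "Omega_set A B x0 \<subseteq> dist_average A B x0"
      unfolding Omega_set_def dist_average_def by auto
    also have "\<dots> \<subseteq> cball 0 (R + 2 * R * \<bar>x0\<bar>)"
      by (rule dist_average_bounded[OF JA(2) JB(2) RA RB JA(1) JB(1)]) (use R in auto)
    finally show ?thesis by (meson bounded_cball bounded_subset)
  qed
  have Oeq1: "Omega_set A B x0 = {p. x0 * signed_dist p A + (1 - x0) * signed_dist p B = 0}" for x0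
    unfolding Omega_set_def f_avg_def by simp
  have Oeq2: "Omega_set A B x0 = {p. (1 - x0) * signed_dist p B + x0 * signed_dist p A = 0}" for x0
    unfolding Omega_set_def f_avg_def by (simp add: add.commute)
  have Oneg: "negligible (Omega_set A B x0)" if "x0 \<noteq> 1/2" for x0
  proof (cases "\<bar>1 - x0\<bar> < \<bar>x0\<bar>")
    case True
    show ?thesis unfolding Oeq1
      by (rule zero_set_negligible[OF JA(2) JA(3) True]) (use Obd[of x0] Oeq1 in simp)
  next
    case False
    then have "\<bar>x0\<bar> < \<bar>1 - x0\<bar>" using that by (auto simp: abs_if split: if_splits)
    then show ?thesis unfolding Oeq2
      by (rule zero_set_negligible[OF JB(2) JB(3)]) (use Obd[of x0] Oeq2 in simp)
  qed
  have hc: "isCont h x0" if "negligible (Omega_set A B x0)" for x0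
    unfolding h_def by (rule h_cont_at[OF JA(2) JB(2) RA RB JA(1) JB(1) _ that]) (use R in simp)
  have zc: "negligible (Omega_set A B (1/2))" if "zero_measure_cond A B"
  proof -
    have "closed (Omega_set A B (1/2))" unfolding Omega_set_def
      by (rule closed_Collect_eq) (auto intro: f_avg_cont)
    then have "Omega_set A B (1/2) \<in> lmeasurable"
      using Obd by (simp add: lmeasurable_compact compact_eq_bounded_closed)
    then show ?thesis using that unfolding zero_measure_cond_def by (simp add: negligible_iff_measure0)
  qed
  show ?thesis
  proof (intro conjI impI allI)
    assume z: "zero_measure_cond A B"
    show "continuous_on UNIV h"
    proof (rule continuous_at_imp_continuous_on, intro ballI)
      fix x :: real
      show "isCont h x"
      proof (cases "x = 1/2")
        case True
        show ?thesis unfolding True by (rule hc[OF zc[OF z]])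
      qed (use hc Oneg in blast)
    qed
  next
    fix x :: real assume "x \<noteq> 1/2"
    then show "isCont h x" using hc Oneg by blast
  qed
qed

end
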